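(* Every $\Rsh$-closed $\Rsh$-distributive subclass of a finite multi-algebra is dissociable.
   Context: A finite non-associative algebra is a tuple $(\mathcal A,\cup,\neg,\emptyset,\mathcal B,\diamond,\overline{\cdot},e)$ where $(\mathcal A,\cup,\neg,\emptyset,\mathcal B)$ is a finite Boolean algebra (with $x\cap y=\neg(\neg x\cup\neg y)$) and for all $x,y,z$: $\overline{\overline x}=x$, $\overline{x\cup y}=\overline x\cup\overline y$, $\overline{x\diamond y}=\overline y\diamond\overline x$, $e\diamond x=x\diamond e=x$, $x\diamond(y\cup z)=(x\diamond y)\cup(x\diamond z)$, $(x\diamond y)\cap\overline z=\emptyset\iff(y\diamond z)\cap\overline x=\emptyset$. $r\subseteq r'$ means $r\cup r'=r'$. A projection operator from $\mathcal A$ to $\mathcal A'$ is a map $\Rsh$ with $\Rsh(r\cup r')=\Rsh r\cup\Rsh r'$ and $\Rsh\overline r=\overline{\Rsh r}$. A finite multi-algebra is a product $\mathcal A_1\times\cdots\times\mathcal A_m$ of finite non-associative algebras with projection operators $\Rsh_i^j:\mathcal A_i\to\mathcal A_j$ for all distinct $i,j$; $\subseteq,\diamond,\cap,\overline{\cdot}$ componentwise on relations $R=(R_1,\dots,R_m)$. $R$ is closed under projection if $R_j\subseteq\Rsh_i^jR_i$ for all distinct $i,j$; the projection closure $\Rsh R$: repeatedly replace $R_j$ by $R_j\cap\Rsh_i^jR_i$ until a fixed point. A network over $\mathcal S$ is a finite set $E$ of variables with $N^{xy}\in\mathcal S$ for all distinct $x,y$, $N^{yx}=\overline{N^{xy}}$;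 $N_i^{xy}=(N^{xy})_i$. It is trivially inconsistent if some $N_i^{xy}=\emptyset$; closed under composition if $N^{xz}\subseteq N^{xy}\diamond N^{yz}$ for all distinct $x,y,z$; closed under projection if all $N^{xy}$ are; algebraically consistent if closed under both and not trivially inconsistent. $N$ is dissociable if replacing each $N^{xy}$ by $\Rsh N^{xy}$ and then closing under composition (repeating $N^{xz}\leftarrow N^{xz}\cap(N^{xy}\diamond N^{yz})$ to a fixed point) yields a network that is algebraically consistent or trivially inconsistent; a subset is dissociable if every network over it is. A subclass is a subset closed under $\diamond$, $\cap$ and converse; slices $\mathcal S_i=\{R_i:R\in\mathcal S\}$; $\mathcal S$ is $\Rsh$-closed if $\Rsh R\in\mathcal S$ for all $R\in\mathcal S$. $\mathcal S$ is $\Rsh$-distributive if for all distinct $i,j$: for all $r,r'\in\mathcal S_i$ with $r\diamond r'\neq\emptyset$, $(\Rsh_i^jr)\diamond(\Rsh_i^jr')\subseteq\Rsh_i^j(r\diamond r')$; and for all $r,r'\in\mathcal S_i$ with $r\cap r'\neq\emptyset$, $(\Rsh_i^jr)\cap(\Rsh_i^jr')\subseteq\Rsh_i^j(r\cap r')$. *)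

theory Defs
  imports Main
begin

text \<open>A finite Boolean algebra is represented (Stone representation) as the
powerset of a finite set of atoms; union, intersection, empty set and
complement relative to the atom set are the Boolean operations.\<close>

record 'b nalg =
  atoms :: "'b set"
  comp  :: "'b set \<Rightarrow> 'b set \<Rightarrow> 'b set"
  conv  :: "'b set \<Rightarrow> 'b set"
  ident :: "'b set"

definition nalg :: "'b nalg \<Rightarrow> bool" where
  "nalg A \<longleftrightarrow>
     finite (atoms A) \<and> ident A \<subseteq> atoms A \<and>
     (\<forall>x. x \<subseteq> atoms A \<longrightarrow> conv A x \<subseteq> atoms A) \<and>
     (\<forall>x y. x \<subseteq> atoms A \<longrightarrow> y \<subseteq> atoms A \<longrightarrow> comp A x y \<subseteq> atoms A) \<and>
     (\<forall>x y z. x \<subseteq> atoms A \<longrightarrow> y \<subseteq> atoms A \<longrightarrow> z \<subseteq> atoms A \<longrightarrow>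
        conv A (conv A x) = x \<and>
        conv A (x \<union> y) = conv A x \<union> conv A y \<and>
        conv A (comp A x y) = comp A (conv A y) (conv A x) \<and>
        comp A (ident A) x = x \<and> comp A x (ident A) = x \<and>
        comp A x (y \<union> z) = comp A x y \<union> comp A x z \<and>
        ((comp A x y \<inter> conv A z = {}) \<longleftrightarrow> (comp A y z \<inter> conv A x = {})))"

text \<open>Components are indexed by 0..<dim M; prj M i j is the
projection operator from component i to component j.\<close>

record 'b malg =
  dim :: nat
  alg :: "nat \<Rightarrow> 'b nalg"
  prj :: "nat \<Rightarrow> nat \<Rightarrow> 'b set \<Rightarrow> 'b set"

definition malg :: "'b malg \<Rightarrow> bool" where
  "malg M \<longleftrightarrow>
     (\<forall>i<dim M. nalg (alg M i)) \<and>
     (\<forall>i<dim M. \<forall>j<dim M. i \<noteq> j \<longrightarrow>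
        (\<forall>r. r \<subseteq> atoms (alg M i) \<longrightarrow> prj M i j r \<subseteq> atoms (alg M j)) \<and>
        (\<forall>r r'. r \<subseteq> atoms (alg M i) \<longrightarrow> r' \<subseteq> atoms (alg M i) \<longrightarrow>
            prj M i j (r \<union> r') = prj M i j r \<union> prj M i j r') \<and>
        (\<forall>r. r \<subseteq> atoms (alg M i) \<longrightarrow>
            prj M i j (conv (alg M i) r) = conv (alg M j) (prj M i j r)))"

definition rels :: "'b malg \<Rightarrow> (nat \<Rightarrow> 'b set) set" where
  "rels M = {R. (\<forall>i<dim M. R i \<subseteq> atoms (alg M i)) \<and> (\<forall>i. dim M \<le> i \<longrightarrow> R i = {})}"

definition msub :: "'b malg \<Rightarrow> (nat \<Rightarrow> 'b set) \<Rightarrow> (nat \<Rightarrow> 'b set) \<Rightarrow> bool" where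
  "msub M R S \<longleftrightarrow> (\<forall>i<dim M. R i \<subseteq> S i)"

definition mcomp :: "'b malg \<Rightarrow> (nat \<Rightarrow> 'b set) \<Rightarrow> (nat \<Rightarrow> 'b set) \<Rightarrow> (nat \<Rightarrow> 'b set)" where
  "mcomp M R S = (\<lambda>i. if i < dim M then comp (alg M i) (R i) (S i) else {})"

definition minter :: "'b malg \<Rightarrow> (nat \<Rightarrow> 'b set) \<Rightarrow> (nat \<Rightarrow> 'b set) \<Rightarrow> (nat \<Rightarrow> 'b set)" where
  "minter M R S = (\<lambda>i. if i < dim M then R i \<inter> S i else {})"

definition mconv :: "'b malg \<Rightarrow> (nat \<Rightarrow> 'b set) \<Rightarrow> (nat \<Rightarrow> 'b set)" where
  "mconv M R = (\<lambda>i. if i < dim M then conv (alg M i) (R i) else {})"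

definition proj_closed :: "'b malg \<Rightarrow> (nat \<Rightarrow> 'b set) \<Rightarrow> bool" where
  "proj_closed M R \<longleftrightarrow>
     (\<forall>i<dim M. \<forall>j<dim M. i \<noteq> j \<longrightarrow> R j \<subseteq> prj M i j (R i))"

definition proj_step :: "'b malg \<Rightarrow> (nat \<Rightarrow> 'b set) \<Rightarrow> (nat \<Rightarrow> 'b set) \<Rightarrow> bool" where
  "proj_step M R R' \<longleftrightarrow>
     (\<exists>i<dim M. \<exists>j<dim M. i \<noteq> j \<and> R' = R(j := R j \<inter> prj M i j (R i)))"

definition proj_closure_of :: "'b malg \<Rightarrow> (nat \<Rightarrow> 'b set) \<Rightarrow> (nat \<Rightarrow> 'b set) \<Rightarrow> bool" where
  "proj_closure_of M R S \<longleftrightarrow> (proj_step M)\<^sup>*\<^sup>* R S \<and> proj_closed M S"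

definition is_subclass :: "'b malg \<Rightarrow> (nat \<Rightarrow> 'b set) set \<Rightarrow> bool" where
  "is_subclass M S \<longleftrightarrow> S \<subseteq> rels M \<and>
     (\<forall>R\<in>S. \<forall>R'\<in>S. mcomp M R R' \<in> S \<and> minter M R R' \<in> S) \<and>
     (\<forall>R\<in>S. mconv M R \<in> S)"

definition slice :: "(nat \<Rightarrow> 'b set) set \<Rightarrow> nat \<Rightarrow> 'b set set" where
  "slice S i = {R i | R. R \<in> S}"

definition proj_closed_class :: "'b malg \<Rightarrow> (nat \<Rightarrow> 'b set) set \<Rightarrow> bool" where
  "proj_closed_class M S \<longleftrightarrow> (\<forall>R\<in>S. \<forall>T. proj_closure_of M R T \<longrightarrow> T \<in> S)"

definition proj_distributive :: "'b malg \<Rightarrow> (nat \<Rightarrow> 'b set) set \<Rightarrow> bool" where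
  "proj_distributive M S \<longleftrightarrow>
     (\<forall>i<dim M. \<forall>j<dim M. i \<noteq> j \<longrightarrow>
        (\<forall>r\<in>slice S i. \<forall>r'\<in>slice S i.
           (comp (alg M i) r r' \<noteq> {} \<longrightarrow>
              comp (alg M j) (prj M i j r) (prj M i j r') \<subseteq> prj M i j (comp (alg M i) r r')) \<and>
           (r \<inter> r' \<noteq> {} \<longrightarrow>
              prj M i j r \<inter> prj M i j r' \<subseteq> prj M i j (r \<inter> r'))))"

type_synonym ('v, 'b) network = "'v \<Rightarrow> 'v \<Rightarrow> (nat \<Rightarrow> 'b set)"

definition network :: "'b malg \<Rightarrow> (nat \<Rightarrow> 'b set) set \<Rightarrow> 'v set \<Rightarrow> ('v, 'b) network \<Rightarrow> bool" where
  "network M S E N \<longleftrightarrow> finite E \<and>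
     (\<forall>x\<in>E. \<forall>y\<in>E. x \<noteq> y \<longrightarrow> N x y \<in> S \<and> N y x = mconv M (N x y))"

definition triv_inconsistent :: "'b malg \<Rightarrow> 'v set \<Rightarrow> ('v, 'b) network \<Rightarrow> bool" where
  "triv_inconsistent M E N \<longleftrightarrow>
     (\<exists>x\<in>E. \<exists>y\<in>E. x \<noteq> y \<and> (\<exists>i<dim M. N x y i = {}))"

definition comp_closed_net :: "'b malg \<Rightarrow> 'v set \<Rightarrow> ('v, 'b) network \<Rightarrow> bool" where
  "comp_closed_net M E N \<longleftrightarrow>
     (\<forall>x\<in>E. \<forall>y\<in>E. \<forall>z\<in>E. x \<noteq> y \<and> y \<noteq> z \<and> x \<noteq> z \<longrightarrow>
        msub M (N x z) (mcomp M (N x y) (N y z)))"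

definition proj_closed_net :: "'b malg \<Rightarrow> 'v set \<Rightarrow> ('v, 'b) network \<Rightarrow> bool" where
  "proj_closed_net M E N \<longleftrightarrow> (\<forall>x\<in>E. \<forall>y\<in>E. x \<noteq> y \<longrightarrow> proj_closed M (N x y))"

definition alg_consistent :: "'b malg \<Rightarrow> 'v set \<Rightarrow> ('v, 'b) network \<Rightarrow> bool" where
  "alg_consistent M E N \<longleftrightarrow>
     comp_closed_net M E N \<and> proj_closed_net M E N \<and> \<not> triv_inconsistent M E N"

text \<open>One step of the composition closure: N^{xz} := N^{xz} \<inter> (N^{xy} \<diamond> N^{yz}),
with N^{zx} updated to the converse so the result remains a network.\<close>
definition comp_step :: "'b malg \<Rightarrow> 'v set \<Rightarrow> ('v, 'b) network \<Rightarrow> ('v, 'b) network \<Rightarrow> bool" where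
  "comp_step M E N N' \<longleftrightarrow>
     (\<exists>x\<in>E. \<exists>y\<in>E. \<exists>z\<in>E. x \<noteq> y \<and> y \<noteq> z \<and> x \<noteq> z \<and>
        (let r = minter M (N x z) (mcomp M (N x y) (N y z)) in
         N' = N(x := (N x)(z := r), z := (N z)(x := mconv M r))))"

definition dissociable_net :: "'b malg \<Rightarrow> 'v set \<Rightarrow> ('v, 'b) network \<Rightarrow> bool" where
  "dissociable_net M E N \<longleftrightarrow>
     (\<forall>N1 N2.
        (\<forall>x\<in>E. \<forall>y\<in>E. x \<noteq> y \<longrightarrow> proj_closure_of M (N x y) (N1 x y)) \<and>
        (comp_step M E)\<^sup>*\<^sup>* N1 N2 \<and> comp_closed_net M E N2 \<longrightarrow>
        alg_consistent M E N2 \<or> triv_inconsistent M E N2)"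

definition dissociable :: "'b malg \<Rightarrow> (nat \<Rightarrow> 'b set) set \<Rightarrow> 'v itself \<Rightarrow> bool" where
  "dissociable M S (_ :: 'v itself) \<longleftrightarrow>
     (\<forall>(E :: 'v set) N. network M S E N \<longrightarrow> dissociable_net M E N)"

end

theory Submission
  imports Defs
begin

lemma nalgD:
  assumes "nalg A"
  shows nalg_conv_in: "\<And>x. x \<subseteq> atoms A \<Longrightarrow> conv A x \<subseteq> atoms A"
    and nalg_comp_in: "\<And>x y. x \<subseteq> atoms A \<Longrightarrow> y \<subseteq> atoms A \<Longrightarrow> comp A x y \<subseteq> atoms A"
    and nalg_conv_conv: "\<And>x. x \<subseteq> atoms A \<Longrightarrow> conv A (conv A x) = x"
    and nalg_conv_un: "\<And>x y. x \<subseteq> atoms A \<Longrightarrow> y \<subseteq> atoms A \<Longrightarrow> conv A (x \<union> y) = conv A x \<union> conv A y"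
    and nalg_conv_comp: "\<And>x y. x \<subseteq> atoms A \<Longrightarrow> y \<subseteq> atoms A \<Longrightarrow> conv A (comp A x y) = comp A (conv A y) (conv A x)"
    and nalg_comp_un: "\<And>x y z. x \<subseteq> atoms A \<Longrightarrow> y \<subseteq> atoms A \<Longrightarrow> z \<subseteq> atoms A \<Longrightarrow> comp A x (y \<union> z) = comp A x y \<union> comp A x z"
    and nalg_cyc: "\<And>x y z. x \<subseteq> atoms A \<Longrightarrow> y \<subseteq> atoms A \<Longrightarrow> z \<subseteq> atoms A \<Longrightarrow>
        ((comp A x y \<inter> conv A z = {}) \<longleftrightarrow> (comp A y z \<inter> conv A x = {}))"
proof -
  have h: "(\<forall>x. x \<subseteq> atoms A \<longrightarrow> conv A x \<subseteq> atoms A) \<and>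
     (\<forall>x y. x \<subseteq> atoms A \<longrightarrow> y \<subseteq> atoms A \<longrightarrow> comp A x y \<subseteq> atoms A) \<and>
     (\<forall>x y z. x \<subseteq> atoms A \<longrightarrow> y \<subseteq> atoms A \<longrightarrow> z \<subseteq> atoms A \<longrightarrow>
        conv A (conv A x) = x \<and>
        conv A (x \<union> y) = conv A x \<union> conv A y \<and>
        conv A (comp A x y) = comp A (conv A y) (conv A x) \<and>
        comp A (ident A) x = x \<and> comp A x (ident A) = x \<and>
        comp A x (y \<union> z) = comp A x y \<union> comp A x z \<and>
        ((comp A x y \<inter> conv A z = {}) \<longleftrightarrow> (comp A y z \<inter> conv A x = {})))"
    using assms unfolding nalg_def by (elim conjE) (intro conjI)
  note h1 = h[THEN conjunct1] and h2 = h[THEN conjunct2, THEN conjunct1]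
    and h3 = h[THEN conjunct2, THEN conjunct2]
  show "\<And>x. x \<subseteq> atoms A \<Longrightarrow> conv A x \<subseteq> atoms A" using h1 by simp
  show "\<And>x y. x \<subseteq> atoms A \<Longrightarrow> y \<subseteq> atoms A \<Longrightarrow> comp A x y \<subseteq> atoms A" using h2 by simp
  show "conv A (conv A x) = x" if "x \<subseteq> atoms A" for x
    using h3[rule_format, OF that that that] by (rule conjunct1)
  show "conv A (x \<union> y) = conv A x \<union> conv A y" if "x \<subseteq> atoms A" "y \<subseteq> atoms A" for x y
    using h3[rule_format, OF that(1) that(2) that(2)] by (rule conjunct2[THEN conjunct1])
  show "conv A (comp A x y) = comp A (conv A y) (conv A x)" if "x \<subseteq> atoms A" "y \<subseteq> atoms A" for x y
    using h3[rule_format, OF that(1) that(2) that(2)] by (rule conjunct2[THEN conjunct2, THEN conjunct1])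
  show "comp A x (y \<union> z) = comp A x y \<union> comp A x z" if "x \<subseteq> atoms A" "y \<subseteq> atoms A" "z \<subseteq> atoms A" for x y z
    using h3[rule_format, OF that] by (rule conjunct2[THEN conjunct2, THEN conjunct2, THEN conjunct2, THEN conjunct2, THEN conjunct1])
  show "((comp A x y \<inter> conv A z = {}) \<longleftrightarrow> (comp A y z \<inter> conv A x = {}))" if "x \<subseteq> atoms A" "y \<subseteq> atoms A" "z \<subseteq> atoms A" for x y z
    using h3[rule_format, OF that] by (rule conjunct2[THEN conjunct2, THEN conjunct2, THEN conjunct2, THEN conjunct2, THEN conjunct2])
qed


lemma malgD:
  assumes "malg M"
  shows malg_nalg: "\<And>i. i < dim M \<Longrightarrow> nalg (alg M i)"
    and malg_prj_in: "\<And>i j r. i < dim M \<Longrightarrow> j < dim M \<Longrightarrow> i \<noteq> j \<Longrightarrow> r \<subseteq> atoms (alg M i) \<Longrightarrow>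
          prj M i j r \<subseteq> atoms (alg M j)"
    and malg_prj_un: "\<And>i j r r'. i < dim M \<Longrightarrow> j < dim M \<Longrightarrow> i \<noteq> j \<Longrightarrow> r \<subseteq> atoms (alg M i) \<Longrightarrow>
          r' \<subseteq> atoms (alg M i) \<Longrightarrow> prj M i j (r \<union> r') = prj M i j r \<union> prj M i j r'"
    and malg_prj_conv: "\<And>i j r. i < dim M \<Longrightarrow> j < dim M \<Longrightarrow> i \<noteq> j \<Longrightarrow> r \<subseteq> atoms (alg M i) \<Longrightarrow>
          prj M i j (conv (alg M i) r) = conv (alg M j) (prj M i j r)"
proof -
  note h = assms[unfolded malg_def]
  note h1 = h[THEN conjunct1, rule_format] and h2 = h[THEN conjunct2, rule_format]
  show "\<And>i. i < dim M \<Longrightarrow> nalg (alg M i)" by (rule h1)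
  show "prj M i j r \<subseteq> atoms (alg M j)" if "i < dim M" "j < dim M" "i \<noteq> j" "r \<subseteq> atoms (alg M i)" for i j r
    using h2[OF that(1-3), THEN conjunct1, rule_format, OF that(4)] .
  show "prj M i j (r \<union> r') = prj M i j r \<union> prj M i j r'" if "i < dim M" "j < dim M" "i \<noteq> j" "r \<subseteq> atoms (alg M i)"
     "r' \<subseteq> atoms (alg M i)" for i j r r'
    using h2[OF that(1-3), THEN conjunct2, THEN conjunct1, rule_format, OF that(4,5)] .
  show "prj M i j (conv (alg M i) r) = conv (alg M j) (prj M i j r)" if "i < dim M" "j < dim M" "i \<noteq> j" "r \<subseteq> atoms (alg M i)" for i j r
    using h2[OF that(1-3), THEN conjunct2, THEN conjunct2, rule_format, OF that(4)] .
qed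

lemma nalg_conv_mono:
  assumes "nalg A" "x \<subseteq> y" "y \<subseteq> atoms A"
  shows "conv A x \<subseteq> conv A y"
proof -
  have "conv A (x \<union> y) = conv A x \<union> conv A y"
    using assms nalg_conv_un[OF assms(1), of x y] by blast
  moreover have "x \<union> y = y" using assms by auto
  ultimately show ?thesis by auto
qed

lemma nalg_conv_empty:
  assumes "nalg A" shows "conv A {} = {}"
proof -
  have a: "conv A {} \<subseteq> atoms A" using nalg_conv_in[OF assms, of "{}"] by simp
  have "conv A {} \<subseteq> conv A (conv A {})"
    using nalg_conv_mono[OF assms _ a] by blast
  moreover have "conv A (conv A {}) = {}" using nalg_conv_conv[OF assms, of "{}"] by simp
  ultimately show ?thesis by blast
qed

lemma nalg_comp_empty:
  assumes "nalg A" "x \<subseteq> atoms A"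
  shows "comp A {} x = {}" "comp A x {} = {}"
proof -
  have ce: "conv A {} = {}" using nalg_conv_empty[OF assms(1)] .
  have ca: "conv A (atoms A) \<subseteq> atoms A" using nalg_conv_in[OF assms(1)] by blast
  have cca: "conv A (conv A (atoms A)) = atoms A" using nalg_conv_conv[OF assms(1)] by blast
  note cyc = nalg_cyc[OF assms(1)]
  note inA = nalg_comp_in[OF assms(1)]
  have e: "{} \<subseteq> atoms A" by simp
  have "comp A {} x \<inter> conv A (conv A (atoms A)) = {}"
    using cyc[OF e assms(2) ca] cyc[OF assms(2) ca e] ce by simp
  then show "comp A {} x = {}" using cca inA[OF e assms(2)] by auto
  have "comp A x {} \<inter> conv A (conv A (atoms A)) = {}"
    using cyc[OF assms(2) e ca] cyc[OF e ca assms(2)] ce by simp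
  then show "comp A x {} = {}" using cca inA[OF assms(2) e] by auto
qed

lemma nalg_comp_mono:
  assumes A: "nalg A" and "x \<subseteq> x'" "x' \<subseteq> atoms A" "y \<subseteq> y'" "y' \<subseteq> atoms A"
  shows "comp A x y \<subseteq> comp A x' y'"
proof -
  have x: "x \<subseteq> atoms A" and y: "y \<subseteq> atoms A" using assms by auto
  note d = nalg_comp_un[OF A] and cc = nalg_conv_conv[OF A] and cca = nalg_conv_comp[OF A]
    and ci = nalg_conv_in[OF A] and ki = nalg_comp_in[OF A]
  have m2: "\<And>a b c. a \<subseteq> atoms A \<Longrightarrow> b \<subseteq> c \<Longrightarrow> c \<subseteq> atoms A \<Longrightarrow> comp A a b \<subseteq> comp A a c"
  proof -
    fix a b c assume h: "a \<subseteq> atoms A" "b \<subseteq> c" "c \<subseteq> atoms A"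
    then have "b \<subseteq> atoms A" by blast
    then have "comp A a (b \<union> c) = comp A a b \<union> comp A a c" using d h by blast
    moreover have "b \<union> c = c" using \<open>b \<subseteq> c\<close> by auto
    ultimately show "comp A a b \<subseteq> comp A a c" by auto
  qed
  have cx: "conv A x \<subseteq> conv A x'" using nalg_conv_mono[OF A assms(2,3)] .
  have "comp A x y = conv A (comp A (conv A y) (conv A x))" using cca[OF x y] cc[OF ki[OF x y]] by simp
  also have "\<dots> \<subseteq> conv A (comp A (conv A y) (conv A x'))"
    by (intro nalg_conv_mono[OF A] m2 ci ki cx y assms(3))
  also have "\<dots> = comp A x' y" using cca[OF assms(3) y] cc[OF ki[OF assms(3) y]] by simp
  also have "\<dots> \<subseteq> comp A x' y'" using m2 assms by auto
  finally show ?thesis .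
qed

lemma pdD:
  assumes "proj_distributive M S" "i < dim M" "j < dim M" "i \<noteq> j" "r \<in> slice S i" "r' \<in> slice S i"
  shows pd_comp: "comp (alg M i) r r' \<noteq> {} \<Longrightarrow>
      comp (alg M j) (prj M i j r) (prj M i j r') \<subseteq> prj M i j (comp (alg M i) r r')"
    and pd_inter: "r \<inter> r' \<noteq> {} \<Longrightarrow> prj M i j r \<inter> prj M i j r' \<subseteq> prj M i j (r \<inter> r')"
proof -
  note h = assms(1)[unfolded proj_distributive_def, rule_format, OF assms(2-6)]
  show "comp (alg M i) r r' \<noteq> {} \<Longrightarrow>
      comp (alg M j) (prj M i j r) (prj M i j r') \<subseteq> prj M i j (comp (alg M i) r r')"
    using h[THEN conjunct1] by (rule mp)
  show "r \<inter> r' \<noteq> {} \<Longrightarrow> prj M i j r \<inter> prj M i j r' \<subseteq> prj M i j (r \<inter> r')"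
    using h[THEN conjunct2] by (rule mp)
qed

lemma pcD:
  assumes "proj_closed M R" "i < dim M" "j < dim M" "i \<noteq> j"
  shows "R j \<subseteq> prj M i j (R i)"
  using assms unfolding proj_closed_def by blast

definition good :: "'b malg \<Rightarrow> (nat \<Rightarrow> 'b set) \<Rightarrow> bool" where
  "good M R \<longleftrightarrow> proj_closed M R \<or> (\<exists>i<dim M. R i = {})"

lemma key:
  assumes M: "malg M" and SC: "is_subclass M S" and D: "proj_distributive M S"
    and AS: "A \<in> S" and BS: "B \<in> S" and CS: "C \<in> S"
    and gA: "good M A" and gB: "good M B" and gC: "good M C"
  shows "good M (minter M A (mcomp M B C))"
proof -
  let ?r = "minter M A (mcomp M B C)"
  have rels: "\<And>R k. R \<in> S \<Longrightarrow> k < dim M \<Longrightarrow> R k \<subseteq> atoms (alg M k)"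
    using SC unfolding is_subclass_def rels_def by blast
  have nal: "\<And>k. k < dim M \<Longrightarrow> nalg (alg M k)" using malg_nalg[OF M] .
  have rk: "\<And>k. k < dim M \<Longrightarrow> ?r k = A k \<inter> comp (alg M k) (B k) (C k)"
    unfolding minter_def mcomp_def by simp
  show ?thesis
  proof (cases "\<exists>i<dim M. ?r i = {}")
    case True then show ?thesis unfolding good_def by blast
  next
    case False
    then have ne: "\<And>k. k < dim M \<Longrightarrow> ?r k \<noteq> {}" by blast
    have ne2: "\<And>R k. R \<in> {A,B,C} \<Longrightarrow> k < dim M \<Longrightarrow> R k \<noteq> {}"
    proof -
      fix R k assume R: "R \<in> {A,B,C}" and k: "k < dim M"
      show "R k \<noteq> {}"
      proof
        assume "R k = {}"
        then have "?r k = {}" using R rk[OF k] nalg_comp_empty[OF nal[OF k]] rels[OF BS k] rels[OF CS k]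
          by auto
        then show False using ne[OF k] by blast
      qed
    qed
    have pc: "proj_closed M A" "proj_closed M B" "proj_closed M C"
      using gA gB gC ne2 unfolding good_def by blast+
    have "proj_closed M ?r" unfolding proj_closed_def
    proof (intro allI impI)
      fix i j assume i: "i < dim M" and j: "j < dim M" and ij: "i \<noteq> j"
      have prjat: "\<And>R. R \<in> S \<Longrightarrow> prj M i j (R i) \<subseteq> atoms (alg M j)"
        using malg_prj_in[OF M i j ij rels[OF _ i]] .
      have sl: "\<And>R. R \<in> S \<Longrightarrow> R i \<in> slice S i" unfolding slice_def by blast
      have BCS: "mcomp M B C \<in> S" using SC BS CS unfolding is_subclass_def by blast
      have BCi: "mcomp M B C i = comp (alg M i) (B i) (C i)" using i unfolding mcomp_def by simp
      have sBC: "comp (alg M i) (B i) (C i) \<in> slice S i" using sl[OF BCS] BCi by simp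
      have "?r j = A j \<inter> comp (alg M j) (B j) (C j)" using rk[OF j] .
      also have "\<dots> \<subseteq> prj M i j (A i) \<inter> comp (alg M j) (prj M i j (B i)) (prj M i j (C i))"
        using pcD[OF pc(1) i j ij] nalg_comp_mono[OF nal[OF j] pcD[OF pc(2) i j ij] prjat[OF BS] pcD[OF pc(3) i j ij] prjat[OF CS]]
        by blast
      also have "\<dots> \<subseteq> prj M i j (A i) \<inter> prj M i j (comp (alg M i) (B i) (C i))"
      proof -
        have "comp (alg M i) (B i) (C i) \<noteq> {}" using ne[OF i] rk[OF i] by blast
        then show ?thesis using pd_comp[OF D i j ij sl[OF BS] sl[OF CS]] by blast
      qed
      also have "\<dots> \<subseteq> prj M i j (A i \<inter> comp (alg M i) (B i) (C i))"
        using pd_inter[OF D i j ij sl[OF AS] sBC] ne[OF i] rk[OF i] by simp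
      also have "\<dots> = prj M i j (?r i)" using rk[OF i] by simp
      finally show "?r j \<subseteq> prj M i j (?r i)" .
    qed
    then show ?thesis unfolding good_def by blast
  qed
qed

lemma good_conv:
  assumes M: "malg M" and SC: "is_subclass M S" and RS: "R \<in> S" and g: "good M R"
  shows "good M (mconv M R)"
proof -
  have rels: "\<And>k. k < dim M \<Longrightarrow> R k \<subseteq> atoms (alg M k)"
    using SC RS unfolding is_subclass_def rels_def by blast
  have nal: "\<And>k. k < dim M \<Longrightarrow> nalg (alg M k)" using malg_nalg[OF M] .
  show ?thesis
  proof (cases "\<exists>i<dim M. R i = {}")
    case True
    then obtain i where "i < dim M" "R i = {}" by blast
    then have "mconv M R i = {}" unfolding mconv_def using nalg_conv_empty[OF nal] by auto
    then show ?thesis unfolding good_def using \<open>i < dim M\<close> by blast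
  next
    case False
    then have pc: "proj_closed M R" using g unfolding good_def by blast
    have "proj_closed M (mconv M R)" unfolding proj_closed_def
    proof (intro allI impI)
      fix i j assume i: "i < dim M" and j: "j < dim M" and ij: "i \<noteq> j"
      have pa: "prj M i j (R i) \<subseteq> atoms (alg M j)" using malg_prj_in[OF M i j ij rels[OF i]] .
      have pcv: "prj M i j (conv (alg M i) (R i)) = conv (alg M j) (prj M i j (R i))"
        using malg_prj_conv[OF M i j ij rels[OF i]] .
      have "conv (alg M j) (R j) \<subseteq> conv (alg M j) (prj M i j (R i))"
        using nalg_conv_mono[OF nal[OF j] _ pa] pc i j ij unfolding proj_closed_def by blast
      then show "mconv M R j \<subseteq> prj M i j (mconv M R i)" using pcv i j unfolding mconv_def by simp
    qed
    then show ?thesis unfolding good_def by blast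
  qed
qed

definition inv_net :: "'b malg \<Rightarrow> (nat \<Rightarrow> 'b set) set \<Rightarrow> 'v set \<Rightarrow> ('v, 'b) network \<Rightarrow> bool" where
  "inv_net M S E N \<longleftrightarrow> (\<forall>x\<in>E. \<forall>y\<in>E. x \<noteq> y \<longrightarrow> N x y \<in> S \<and> good M (N x y))"

lemma step_inv:
  assumes M: "malg M" and SC: "is_subclass M S" and D: "proj_distributive M S"
    and st: "comp_step M E N N'" and I: "inv_net M S E N"
  shows "inv_net M S E N'"
proof -
  obtain x y z where xyz: "x \<in> E" "y \<in> E" "z \<in> E" "x \<noteq> y" "y \<noteq> z" "x \<noteq> z"
    and N': "N' = N(x := (N x)(z := minter M (N x z) (mcomp M (N x y) (N y z))),
                   z := (N z)(x := mconv M (minter M (N x z) (mcomp M (N x y) (N y z)))))"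
    using st unfolding comp_step_def Let_def by blast
  let ?r = "minter M (N x z) (mcomp M (N x y) (N y z))"
  have rS: "?r \<in> S" using SC I xyz unfolding is_subclass_def inv_net_def by blast
  have rg: "good M ?r" using key[OF M SC D, of "N x z" "N x y" "N y z"] I xyz unfolding inv_net_def by blast
  have cS: "mconv M ?r \<in> S" using SC rS unfolding is_subclass_def by blast
  have cg: "good M (mconv M ?r)" using good_conv[OF M SC rS rg] .
  show ?thesis unfolding inv_net_def
  proof (intro ballI impI)
    fix a b assume a: "a \<in> E" and b: "b \<in> E" and ab: "a \<noteq> b"
    have "N' a b = (if a = x \<and> b = z then ?r else if a = z \<and> b = x then mconv M ?r else N a b)"
      using N' xyz by auto
    then show "N' a b \<in> S \<and> good M (N' a b)"
      using rS rg cS cg I a b ab unfolding inv_net_def by auto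
  qed
qed

theorem proposition6p9:
  fixes M :: "'b malg" and S :: "(nat \<Rightarrow> 'b set) set"
  assumes "malg M"
    and "is_subclass M S"
    and "proj_closed_class M S"
    and "proj_distributive M S"
  shows "dissociable M S TYPE('v)"
  unfolding dissociable_def
proof (intro allI impI)
  fix E :: "'v set" and N assume net: "network M S E N"
  show "dissociable_net M E N" unfolding dissociable_net_def
  proof (intro allI impI)
    fix N1 N2 assume h: "(\<forall>x\<in>E. \<forall>y\<in>E. x \<noteq> y \<longrightarrow> proj_closure_of M (N x y) (N1 x y)) \<and>
        (comp_step M E)\<^sup>*\<^sup>* N1 N2 \<and> comp_closed_net M E N2"
    have I1: "inv_net M S E N1" unfolding inv_net_def
    proof (intro ballI impI)
      fix x y assume "x \<in> E" "y \<in> E" "x \<noteq> y"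
      then have "N x y \<in> S" "proj_closure_of M (N x y) (N1 x y)"
        using net h unfolding network_def by blast+
      then show "N1 x y \<in> S \<and> good M (N1 x y)"
        using assms(3) unfolding proj_closed_class_def good_def proj_closure_of_def by blast
    qed
    have "(comp_step M E)\<^sup>*\<^sup>* N1 N2" using h by blast
    then have I2: "inv_net M S E N2"
      by (induction rule: rtranclp_induct) (use I1 step_inv[OF assms(1,2,4)] in blast)+
    show "alg_consistent M E N2 \<or> triv_inconsistent M E N2"
    proof (cases "triv_inconsistent M E N2")
      case False
      then have "proj_closed_net M E N2"
        using I2 unfolding inv_net_def good_def triv_inconsistent_def proj_closed_net_def by blast
      then show ?thesis using False h unfolding alg_consistent_def by blast
    qed simp
  qed
qed

end
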